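(* Fix integers $T\ge 1$ and $1\le T_n\le T$, a number $\bar\epsilon_n>0$, and rates $q_n>0$, $q>0$. Define $\epsilon_n^1,\dots,\epsilon_n^T$ recursively by $$\epsilon_n^t=\begin{cases}\dfrac{\bar\epsilon_n-\sum_{\tau=1}^{t-1}\epsilon_n^\tau}{T-t+1}\left(\dfrac{q_n}{q}\right)^2, & t<T_n,\\[2ex] \dfrac{\bar\epsilon_n-\sum_{\tau=1}^{t-1}\epsilon_n^\tau}{T-t+1}, & t\ge T_n.\end{cases}$$ Then for $1\le t<T_n$, $$\epsilon_n^t=\frac{\bar\epsilon_n}{T-t+1}\left(\frac{q_n}{q}\right)^2\prod_{i=1}^{t-1}\left(1-\frac{1}{T-t+1+i}\left(\frac{q_n}{q}\right)^2\right),$$ and for $T_n\le t\le T$, $$\epsilon_n^t=\frac{\bar\epsilon_n}{T-T_n+1}\prod_{i=1}^{T_n-1}\left(1-\frac{1}{T-T_n+1+i}\left(\frac{q_n}{q}\right)^2\right).$$ (Empty products equal $1$.)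
   Context: In the paper's time-adaptive differentially private federated learning scheme, $\bar\epsilon_n$ is the total Rényi-DP privacy budget of client $n$, $T$ is the number of training rounds, $T_n$ is the round at which client $n$ transitions from a "saving" mode (sampling rate $q_n$) to a "spending" mode (sampling rate $q$), and $\epsilon_n^t$ is the Rényi-DP privacy spent by client $n$ in round $t$. *)

theory Defs
  imports Complex_Main
begin

end

theory Submission
  imports Defs
begin

lemma prod_reidx:
  fixes f :: "nat \<Rightarrow> real" and t T :: nat
  assumes "t \<le> T"
  shows "(\<Prod>i=1..<t. f (T - t + 1 + i)) = (\<Prod>j=1..<t. f (T - j + 1))"
  using assms
  by (intro prod.reindex_bij_witness[where i="\<lambda>j. t - j" and j="\<lambda>i. t - i"]) auto

theorem mainTheorem1:
  fixes T Tn :: nat and epsbar qn q :: real and e :: "nat \<Rightarrow> real"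
  assumes "T \<ge> 1" and "1 \<le> Tn" and "Tn \<le> T"
    and "epsbar > 0" and "qn > 0" and "q > 0"
    and rec: "\<forall>t\<in>{1..T}. e t =
      (if t < Tn
       then (epsbar - (\<Sum>\<tau>=1..<t. e \<tau>)) / real (T - t + 1) * (qn / q)^2
       else (epsbar - (\<Sum>\<tau>=1..<t. e \<tau>)) / real (T - t + 1))"
  shows "(\<forall>t. 1 \<le> t \<and> t < Tn \<longrightarrow>
            e t = epsbar / real (T - t + 1) * (qn / q)^2 *
                  (\<Prod>i=1..<t. 1 - 1 / real (T - t + 1 + i) * (qn / q)^2))
       \<and> (\<forall>t. Tn \<le> t \<and> t \<le> T \<longrightarrow>
            e t = epsbar / real (T - Tn + 1) *
                  (\<Prod>i=1..<Tn. 1 - 1 / real (T - Tn + 1 + i) * (qn / q)^2))"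
proof -
  define r where "r = (qn / q)^2"
  define R where "R t = epsbar - (\<Sum>\<tau>=1..<t. e \<tau>)" for t
  define P where "P t = (\<Prod>j=1..<t. 1 - 1 / real (T - j + 1) * r)" for t
  have Rs: "R (Suc t) = R t - e t" if "t \<ge> 1" for t
    using that by (simp add: R_def)
  have e1: "e t = R t / real (T - t + 1) * r" if "1 \<le> t" "t < Tn" for t
    using rec that assms(3) by (auto simp: R_def r_def)
  have e2: "e t = R t / real (T - t + 1)" if "Tn \<le> t" "t \<le> T" for t
    using rec that assms(2) by (auto simp: R_def)
  have A: "R t = epsbar * P t" if "1 \<le> t" "t \<le> Tn" for t
    using that
  proof (induction t)
    case 0 then show ?case by simp
  next
    case (Suc t)
    show ?case
    proof (cases "t = 0")
      case True then show ?thesis by (simp add: R_def P_def)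
    next
      case False
      then have t1: "1 \<le> t" by simp
      have pos: "real (T - t + 1) > 0" by simp
      have "R (Suc t) = R t - R t / real (T - t + 1) * r"
        using Rs[OF t1] e1[OF t1] Suc.prems by simp
      also have "\<dots> = R t * (1 - 1 / real (T - t + 1) * r)" by (simp add: algebra_simps)
      also have "\<dots> = epsbar * P (Suc t)"
        using Suc.IH[OF t1] Suc.prems t1 by (simp add: P_def prod.atLeastLessThan_Suc)
      finally show ?thesis .
    qed
  qed
  have B: "R t = R Tn * real (T - t + 1) / real (T - Tn + 1)" if "Tn \<le> t" "t \<le> T" for t
    using that
  proof (induction t)
    case 0 then show ?case using assms by simp
  next
    case (Suc t)
    show ?case
    proof (cases "Suc t = Tn")
      case True then show ?thesis by simp
    next
      case False
      then have h: "Tn \<le> t" "t \<le> T" "t < T" using Suc.prems by auto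
      have t1: "1 \<le> t" using h assms(2) by simp
      have pos: "real (T - t + 1) > 0" by simp
      have "R (Suc t) = R t - R t / real (T - t + 1)"
        using Rs[OF t1] e2[OF h(1,2)] by simp
      also have "\<dots> = R t * real (T - t) / real (T - t + 1)"
        using pos by (simp add: field_simps)
      also have "\<dots> = R Tn * real (T - Suc t + 1) / real (T - Tn + 1)"
        using Suc.IH h pos by (simp add: Suc_diff_le of_nat_diff)
      finally show ?thesis .
    qed
  qed
  show ?thesis
  proof (intro conjI allI impI)
    fix t assume t: "1 \<le> t \<and> t < Tn"
    have "e t = epsbar * P t / real (T - t + 1) * r"
      using e1 A t by simp
    moreover have "P t = (\<Prod>i=1..<t. 1 - 1 / real (T - t + 1 + i) * (qn / q)^2)"
      unfolding P_def r_def using prod_reidx[of t T "\<lambda>k. 1 - 1 / real k * (qn / q)^2"] t assms(3)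
      by simp
    ultimately show "e t = epsbar / real (T - t + 1) * (qn / q)^2 *
                  (\<Prod>i=1..<t. 1 - 1 / real (T - t + 1 + i) * (qn / q)^2)"
      by (simp add: r_def)
  next
    fix t assume t: "Tn \<le> t \<and> t \<le> T"
    have pos: "real (T - t + 1) > 0" by simp
    have "e t = R Tn / real (T - Tn + 1)"
      using e2 B[of t] t pos by simp
    also have "\<dots> = epsbar * P Tn / real (T - Tn + 1)" using A assms by simp
    moreover have "P Tn = (\<Prod>i=1..<Tn. 1 - 1 / real (T - Tn + 1 + i) * (qn / q)^2)"
      unfolding P_def r_def using prod_reidx[of Tn T "\<lambda>k. 1 - 1 / real k * (qn / q)^2"] assms(3)
      by simp
    ultimately show "e t = epsbar / real (T - Tn + 1) *
                  (\<Prod>i=1..<Tn. 1 - 1 / real (T - Tn + 1 + i) * (qn / q)^2)"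
      by simp
  qed
qed

end
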